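(* Let $C$ be an $[n,k]$ code over $\mathbb{F}_q$ with $k\ge 2$. (a) If $C$ is a dual Hamming code, then $d(C^\perp)=3$ and $\gamma(C)=k=k-d(C^\perp)+3$. (b) If $C$ is an MDS code (i.e. its minimum Hamming weight equals $n-k+1$) having no codeword of weight $n$, then $d(C^\perp)=k+1$ and $\gamma(C)=2=k-d(C^\perp)+3$.
   Context: An $[n,k]$ code over $\mathbb{F}_q$ is a $k$-dimensional subspace $C\subseteq\mathbb{F}_q^n$; write $E=\{1,\dots,n\}$. For $\bm{x}\in\mathbb{F}_q^n$, $\mathrm{supp}(\bm{x})=\{i: x_i\neq 0\}$ and the weight is $|\mathrm{supp}(\bm{x})|$; for $B\subseteq\mathbb{F}_q^n$, $\mathrm{Supp}(B)=\bigcup_{\bm{x}\in B}\mathrm{supp}(\bm{x})$. $C^\perp$ is the dual code with respect to the standard inner product and $d(C^\perp)$ is the minimum weight of a nonzero codeword of $C^\perp$. The covering dimension is $\gamma(C)=\infty$ if $\mathrm{Supp}(C)\neq E$, and otherwise $\gamma(C)$ is the least positive integer $r$ such that $C$ has an $r$-dimensional subspace $D$ with $\mathrm{Supp}(D)=E$. A dual Hamming code is an $[(q^k-1)/(q-1),k]$ code over $\mathbb{F}_q$ with a generator matrix whose columns consist of exactly one nonzero vector from each one-dimensional subspace of $\mathbb{F}_q^k$. *)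

theory Defs
  imports "HOL-Analysis.Analysis" "HOL-Library.Extended_Nat"
begin

text \<open>Codes of length n = CARD('n) over a finite field 'a: subspaces of 'a^'n.
  Coordinates E = UNIV :: 'n set.\<close>

definition supp :: "'a::zero ^ 'n \<Rightarrow> 'n set" where
  "supp x = {i. x $ i \<noteq> 0}"

definition wt :: "'a::zero ^ 'n::finite \<Rightarrow> nat" where
  "wt x = card (supp x)"

definition Supp :: "('a::zero ^ 'n) set \<Rightarrow> 'n set" where
  "Supp B = (\<Union>x\<in>B. supp x)"

definition is_code :: "('a::{finite,field} ^ 'n::finite) set \<Rightarrow> bool" where
  "is_code C \<longleftrightarrow> vec.subspace C"

definition dotp :: "'a::comm_ring ^ 'n::finite \<Rightarrow> 'a ^ 'n \<Rightarrow> 'a" where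
  "dotp x y = (\<Sum>i\<in>UNIV. x $ i * y $ i)"

definition dual_code :: "('a::{finite,field} ^ 'n::finite) set \<Rightarrow> ('a ^ 'n) set" where
  "dual_code C = {y. \<forall>x\<in>C. dotp x y = 0}"

definition min_dist :: "('a::{finite,field} ^ 'n::finite) set \<Rightarrow> nat" where
  "min_dist C = (LEAST w. \<exists>x\<in>C. x \<noteq> 0 \<and> wt x = w)"

definition covering_dim :: "('a::{finite,field} ^ 'n::finite) set \<Rightarrow> enat" where
  "covering_dim C =
     (if Supp C \<noteq> UNIV then \<infinity>
      else enat (LEAST r. 0 < r \<and>
             (\<exists>D. vec.subspace D \<and> D \<subseteq> C \<and> vec.dim D = r \<and> Supp D = UNIV)))"

text \<open>Dual Hamming code: an [(q^k-1)/(q-1), k] code with a k x n generator matrix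
  (rows G 0, ..., G (k-1), a basis of C) whose columns consist of exactly one nonzero
  vector from each one-dimensional subspace of F_q^k. Vectors of F_q^k are represented
  as functions v :: nat => 'a vanishing outside {0..<k}; column j of G is
  (\<lambda>i. G i $ j) restricted to i < k.\<close>
definition dual_hamming :: "('a::{finite,field} ^ 'n::finite) set \<Rightarrow> bool" where
  "dual_hamming C \<longleftrightarrow> vec.subspace C \<and>
     (let k = vec.dim C in
       CARD('n) = (CARD('a) ^ k - 1) div (CARD('a) - 1) \<and>
       (\<exists>G :: nat \<Rightarrow> 'a ^ 'n.
          inj_on G {..<k} \<and> vec.independent (G ` {..<k}) \<and> vec.span (G ` {..<k}) = C \<and>
          (\<forall>j. \<exists>i<k. G i $ j \<noteq> 0) \<and>
          (\<forall>v :: nat \<Rightarrow> 'a. (\<forall>i\<ge>k. v i = 0) \<and> v \<noteq> (\<lambda>_. 0) \<longrightarrow>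
              (\<exists>!j. \<exists>c. \<forall>i<k. G i $ j = c * v i))))"

definition is_MDS :: "('a::{finite,field} ^ 'n::finite) set \<Rightarrow> bool" where
  "is_MDS C \<longleftrightarrow> vec.subspace C \<and> min_dist C = CARD('n) - vec.dim C + 1"

end

theory Submission
  imports Defs
begin


lemma card_field_ge2: "2 \<le> CARD('a::{finite,field})"
proof -
  have "card {0::'a, 1} = 2" by simp
  moreover have "card {0::'a,1} \<le> CARD('a)" by (rule card_mono) auto
  ultimately show ?thesis by simp
qed

lemma card_span_indep:
  fixes B :: "('a::{finite,field} ^ 'n::finite) set"
  assumes ind: "vec.independent B"
  shows "card (vec.span B) = CARD('a) ^ card B"
proof -
  have fB: "finite B" using ind vec.independent_bound_general by blast
  define f where "f u = (\<Sum>v\<in>B. u v *s v)" for u :: "('a^'n) \<Rightarrow> 'a"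
  let ?P = "PiE B (\<lambda>_. UNIV :: 'a set)"
  have img: "f ` ?P = vec.span B"
  proof
    show "f ` ?P \<subseteq> vec.span B" unfolding vec.span_finite[OF fB] f_def by auto
    show "vec.span B \<subseteq> f ` ?P"
    proof
      fix x assume "x \<in> vec.span B"
      then obtain u where x: "x = (\<Sum>v\<in>B. u v *s v)" unfolding vec.span_finite[OF fB] by auto
      have "restrict u B \<in> ?P" by auto
      moreover have "f (restrict u B) = x" unfolding f_def x by (rule sum.cong) auto
      ultimately show "x \<in> f ` ?P" by (metis image_eqI)
    qed
  qed
  have inj: "inj_on f ?P"
  proof
    fix u w assume u: "u \<in> ?P" and w: "w \<in> ?P" and e: "f u = f w"
    have "(\<Sum>v\<in>B. (u v - w v) *s v) = 0"
      using e by (simp add: f_def vec.scale_left_diff_distrib sum_subtractf)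
    then have "\<forall>v\<in>B. u v - w v = 0"
      using ind unfolding vec.independent_explicit by (auto dest!: spec[of _ "\<lambda>v. u v - w v"])
    then show "u = w" using u w by (intro PiE_ext) auto
  qed
  have "card (vec.span B) = card ?P" using card_image[OF inj] img by simp
  also have "\<dots> = CARD('a) ^ card B" using fB by (simp add: card_PiE)
  finally show ?thesis .
qed

lemma card_subspace:
  fixes C :: "('a::{finite,field} ^ 'n::finite) set"
  assumes "vec.subspace C"
  shows "card C = CARD('a) ^ vec.dim C"
proof -
  obtain B where B: "B \<subseteq> C" "vec.independent B" "C \<subseteq> vec.span B" "card B = vec.dim C"
    using vec.basis_exists by blast
  have "vec.span B = C" using vec.span_subspace[OF B(1) B(3) assms] .
  then show ?thesis using card_span_indep[OF B(2)] B(4) by simp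
qed



lemma mds_weight:
  fixes C :: "('a::{finite,field} ^ 'n::finite) set"
  assumes "is_MDS C" "x \<in> C" "x \<noteq> 0"
  shows "CARD('n) - vec.dim C + 1 \<le> wt x"
proof -
  have "min_dist C \<le> wt x" unfolding min_dist_def by (rule Least_le) (use assms in auto)
  then show ?thesis using assms(1) unfolding is_MDS_def by simp
qed

lemma wt_le_out:
  fixes x :: "'a::zero ^ 'n::finite"
  assumes "\<forall>i\<in>K. x $ i = 0"
  shows "wt x \<le> CARD('n) - card K"
proof -
  have "supp x \<subseteq> UNIV - K" using assms unfolding supp_def by auto
  then have "wt x \<le> card (UNIV - K)" unfolding wt_def by (intro card_mono) auto
  also have "\<dots> = CARD('n) - card K" by (simp add: card_Diff_subset)
  finally show ?thesis .
qed

lemma mds_interp: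
  fixes C :: "('a::{finite,field} ^ 'n::finite) set"
  assumes mds: "is_MDS C" and K: "card K = vec.dim C"
  shows "\<exists>x\<in>C. \<forall>i\<in>K. x $ i = f i"
proof -
  have sub: "vec.subspace C" using mds unfolding is_MDS_def by simp
  define r where "r x = restrict (\<lambda>i. x $ i) K" for x :: "'a^'n"
  let ?P = "PiE K (\<lambda>_. UNIV :: 'a set)"
  have inj: "inj_on r C"
  proof
    fix x y assume x: "x \<in> C" and y: "y \<in> C" and e: "r x = r y"
    have z: "x - y \<in> C" using vec.subspace_diff[OF sub x y] .
    have "\<forall>i\<in>K. (x - y) $ i = 0" using e unfolding r_def by (metis restrict_apply' right_minus_eq vector_minus_component)
    then have "wt (x - y) \<le> CARD('n) - card K" by (rule wt_le_out)
    then have "x - y = 0" using mds_weight[OF mds z] K by (cases "x - y = 0") auto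
    then show "x = y" by simp
  qed
  have sub2: "r ` C \<subseteq> ?P" unfolding r_def by auto
  have fK: "finite K" by simp
  have "card (r ` C) = card C" using card_image[OF inj] .
  also have "\<dots> = CARD('a) ^ card K" using card_subspace[OF sub] K by simp
  also have "\<dots> = card ?P" using fK by (simp add: card_PiE)
  finally have "r ` C = ?P" using card_subset_eq[OF _ sub2] finite_PiE[OF fK] by (metis finite UNIV_I)
  moreover have "restrict f K \<in> ?P" by auto
  ultimately obtain x where "x \<in> C" "r x = restrict f K" by (metis imageE)
  then show ?thesis unfolding r_def by (metis restrict_apply')
qed



lemma dotp_zero_out:
  fixes x y :: "'a::comm_ring ^ 'n::finite"
  shows "dotp x y = (\<Sum>i\<in>UNIV. x $ i * y $ i)" by (simp add: dotp_def)

lemma partb: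
  fixes C :: "('a::{finite,field} ^ 'n::finite) set"
  assumes mds: "is_MDS C" and dimk: "vec.dim C = k" and k2: "k \<ge> 2"
    and nofull: "\<forall>x\<in>C. wt x \<noteq> CARD('n)"
  shows "min_dist (dual_code C) = k + 1 \<and> covering_dim C = enat 2"
proof -
  have sub: "vec.subspace C" using mds unfolding is_MDS_def by simp
  have q2: "2 \<le> CARD('a)" by (rule card_field_ge2)
  have cardC: "card C = CARD('a) ^ k" using card_subspace[OF sub] dimk by simp
  have "card C \<le> card (UNIV :: ('a^'n) set)" by (rule card_mono) auto
  then have "CARD('a) ^ k \<le> CARD('a) ^ CARD('n)" using cardC by (simp add: CARD_vec)
  then have kn: "k \<le> CARD('n)" using q2 power_le_imp_le_exp[of "CARD('a)" k "CARD('n)"] by linarith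
  have kn': "k < CARD('n)"
  proof (rule ccontr)
    assume "\<not> k < CARD('n)"
    then have "k = CARD('n)" using kn by simp
    then have "card C = card (UNIV :: ('a^'n) set)" using cardC by (simp add: CARD_vec)
    then have "C = UNIV" using card_subset_eq[of UNIV C] by auto
    moreover have "wt ((\<chi> i. 1) :: 'a^'n) = CARD('n)" unfolding wt_def supp_def by simp
    ultimately show False using nofull by auto
  qed
  have W: "\<And>x. x \<in> C \<Longrightarrow> x \<noteq> 0 \<Longrightarrow> CARD('n) - k + 1 \<le> wt x" using mds_weight[OF mds] dimk by simp
  have I: "\<And>K f. card K = k \<Longrightarrow> \<exists>x\<in>C. \<forall>i\<in>K. x $ i = f i" using mds_interp[OF mds] dimk by simp
  have low: "k + 1 \<le> wt y" if y: "y \<in> dual_code C" "y \<noteq> 0" for y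
  proof (rule ccontr)
    assume "\<not> k + 1 \<le> wt y"
    then have "card (supp y) \<le> k" unfolding wt_def by simp
    then obtain K where K: "supp y \<subseteq> K" "card K = k"
      using exists_subset_between[of "supp y" k "UNIV :: 'n set"] kn by (auto simp del: One_nat_def)
    obtain a where a: "y $ a \<noteq> 0" using y(2) by (metis vec_eq_iff zero_index)
    obtain x where x: "x \<in> C" "\<forall>i\<in>K. x $ i = (if i = a then 1 else 0)" using I[OF K(2), of "\<lambda>i. if i = a then 1 else 0"] by blast
    have aK: "a \<in> K" using a K(1) unfolding supp_def by auto
    have "\<forall>i. x $ i * y $ i = (if i = a then y $ a else 0)"
    proof
      fix i show "x $ i * y $ i = (if i = a then y $ a else 0)"
      proof (cases "i \<in> K")
        case True then show ?thesis using x(2) by auto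
      next
        case False then have "y $ i = 0" using K(1) unfolding supp_def by auto
        then show ?thesis using False aK by auto
      qed
    qed
    then have "dotp x y = y $ a" unfolding dotp_def by simp
    moreover have "dotp x y = 0" using y(1) x(1) unfolding dual_code_def by auto
    ultimately show False using a by simp
  qed
  obtain K :: "'n set" where K: "card K = k" using exists_subset_between[of "{}" k "UNIV :: 'n set"] kn by (auto simp del: One_nat_def)
  obtain j where j: "j \<notin> K"
  proof -
    have "K \<noteq> UNIV" using K kn' by auto
    then show ?thesis using that by auto
  qed
  have "\<forall>i\<in>K. \<exists>e. e \<in> C \<and> (\<forall>l\<in>K. e $ l = (if l = i then 1 else 0))"
  proof
    fix i assume "i \<in> K"
    show "\<exists>e. e \<in> C \<and> (\<forall>l\<in>K. e $ l = (if l = i then 1 else 0))"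
      using I[OF K, of "\<lambda>l. if l = i then 1 else 0"] by blast
  qed
  from bchoice[OF this] obtain e where e: "\<forall>i\<in>K. e i \<in> C \<and> (\<forall>l\<in>K. e i $ l = (if l = i then 1 else 0))"
    by blast
  have rep: "x = (\<Sum>i\<in>K. x $ i *s e i)" if x: "x \<in> C" for x
  proof -
    let ?z = "x - (\<Sum>i\<in>K. x $ i *s e i)"
    have zC: "?z \<in> C" using x e by (intro vec.subspace_diff[OF sub] vec.subspace_sum[OF sub] vec.subspace_scale[OF sub]) auto
    have "\<forall>l\<in>K. ?z $ l = 0"
    proof
      fix l assume l: "l \<in> K"
      have "(\<Sum>i\<in>K. x $ i * e i $ l) = (\<Sum>i\<in>K. if i = l then x $ l else 0)"
        using e l by (intro sum.cong) auto
      then show "?z $ l = 0" using l by simp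
    qed
    then have "wt ?z \<le> CARD('n) - card K" by (rule wt_le_out)
    then have "wt ?z \<le> CARD('n) - k" using K by simp
    then have "?z = 0" using W[OF zC] by (cases "?z = 0") auto
    then show ?thesis by simp
  qed
  define y :: "'a^'n" where "y = (\<chi> l. if l = j then 1 else if l \<in> K then - (e l $ j) else 0)"
  have yd: "y \<in> dual_code C"
    unfolding dual_code_def
  proof (safe)
    fix x assume x: "x \<in> C"
    have xj: "x $ j = (\<Sum>i\<in>K. x $ i * e i $ j)" using arg_cong[OF rep[OF x], of "\<lambda>v. v $ j"] by simp
    have "\<forall>l. x $ l * y $ l = (if l = j then x $ j else 0) + (if l \<in> K then - (x $ l * e l $ j) else 0)"
      using j unfolding y_def by auto
    then have "dotp x y = (\<Sum>l\<in>UNIV. (if l = j then x $ j else 0) + (if l \<in> K then - (x $ l * e l $ j) else 0))"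
      unfolding dotp_def by simp
    also have "\<dots> = x $ j - (\<Sum>l\<in>K. x $ l * e l $ j)"
      by (simp add: sum.distrib sum.If_cases sum_negf)
    finally show "dotp x y = 0" using xj by simp
  qed
  have "y $ j = 1" unfolding y_def by simp
  then have y0: "y \<noteq> 0" by auto
  have "supp y \<subseteq> insert j K" unfolding supp_def y_def by auto
  then have "wt y \<le> card (insert j K)" unfolding wt_def by (intro card_mono) auto
  then have "wt y \<le> k + 1" using K j by (simp add: card_insert_if)
  then have wty: "wt y = k + 1" using low[OF yd y0] by simp
  have md: "min_dist (dual_code C) = k + 1"
    unfolding min_dist_def
  proof (rule Least_equality)
    show "\<exists>x\<in>dual_code C. x \<noteq> 0 \<and> wt x = k + 1" using yd y0 wty by blast
  next
    fix w assume "\<exists>x\<in>dual_code C. x \<noteq> 0 \<and> wt x = w"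
    then show "k + 1 \<le> w" using low by blast
  qed
  have SuppC: "Supp C = UNIV"
  proof -
    have "j' \<in> Supp C" for j'
    proof -
      obtain K' where K': "{j'} \<subseteq> K'" "card K' = k" using exists_subset_between[of "{j'}" k "UNIV :: 'n set"] kn k2 by auto
      obtain x where "x \<in> C" "\<forall>i\<in>K'. x $ i = 1" using I[OF K'(2), of "\<lambda>_. 1"] by blast
      moreover then have "x $ j' = 1" using K' by auto
      ultimately show ?thesis unfolding Supp_def supp_def by force
    qed
    then show ?thesis by auto
  qed
  obtain S :: "'n set" where S: "card S = k - 1"
  proof -
    have "k - 1 \<le> CARD('n)" using kn by simp
    then obtain S :: "'n set" where "card S = k - 1" using exists_subset_between[of "{}" "k - 1" "UNIV :: 'n set"] by auto
    then show ?thesis using that by blast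
  qed
  obtain a where a: "a \<notin> S"
  proof -
    have "S \<noteq> UNIV" using S kn' k2 by auto
    then show ?thesis using that by auto
  qed
  have cK: "card (insert a S) = k" using S a k2 by (simp add: card_insert_if)
  obtain x where x: "x \<in> C" "\<forall>i\<in>insert a S. x $ i = (if i = a then 1 else 0)" using I[OF cK, of "\<lambda>i. if i = a then 1 else 0"] by blast
  obtain z where z: "z \<in> C" "\<forall>i\<in>insert a S. z $ i = 1" using I[OF cK, of "\<lambda>_. 1"] by blast
  have "x $ a = 1" using x(2) by simp
  then have x0: "x \<noteq> 0" by auto
  have xnz: "x $ i \<noteq> 0" if "i \<notin> S" for i
  proof
    assume xi: "x $ i = 0"
    have ia: "i \<noteq> a" using x(2) xi by auto
    have "\<forall>l\<in>insert i S. x $ l = 0" using xi x(2) a by auto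
    then have "wt x \<le> CARD('n) - card (insert i S)" by (rule wt_le_out)
    also have "\<dots> = CARD('n) - k" using that S k2 by (simp add: card_insert_if)
    finally show False using W[OF x(1) x0] kn' by simp
  qed
  have "S \<noteq> {}" using S k2 by auto
  then obtain s where s: "s \<in> S" by blast
  have zspan: "z \<notin> vec.span {x}"
  proof
    assume "z \<in> vec.span {x}"
    then obtain c where "z = c *s x" unfolding vec.span_singleton by auto
    then have "z $ s = c * x $ s" by simp
    moreover have "z $ s = 1" using z(2) s by simp
    moreover have "x $ s = 0" using x(2) s a by auto
    ultimately show False by simp
  qed
  have xz: "x \<noteq> z" using zspan vec.span_base by blast
  have indep: "vec.independent {z, x}"
    using vec.independent_insertI[OF zspan] x0 by (simp add: vec.independent_insert)
  define P where "P r = (0 < r \<and> (\<exists>D. vec.subspace D \<and> D \<subseteq> C \<and> vec.dim D = r \<and> Supp D = UNIV))" for r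
  have P2: "P 2"
    unfolding P_def
  proof (intro conjI exI)
    let ?D = "vec.span {z, x}"
    show "vec.subspace ?D" by simp
    show "?D \<subseteq> C" using x z sub by (intro vec.span_minimal) auto
    show "vec.dim ?D = 2" using vec.dim_span_eq_card_independent[OF indep] xz by auto
    have "x \<in> ?D" "z \<in> ?D" by (simp_all add: vec.span_base)
    then have "supp x \<union> supp z \<subseteq> Supp ?D" unfolding Supp_def by auto
    moreover have "supp x \<union> supp z = UNIV"
    proof -
      have "i \<in> supp x \<union> supp z" for i
      proof (cases "i \<in> S")
        case True then have "z $ i = 1" using z(2) by simp
        then show ?thesis unfolding supp_def by simp
      next
        case False then show ?thesis using xnz unfolding supp_def by simp
      qed
      then show ?thesis by auto
    qed
    ultimately show "Supp ?D = UNIV" by auto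
  qed simp
  have Pge: "2 \<le> r" if Pr: "P r" for r
  proof (rule ccontr)
    assume "\<not> 2 \<le> r"
    moreover have r0: "0 < r" and "\<exists>D. vec.subspace D \<and> D \<subseteq> C \<and> vec.dim D = r \<and> Supp D = UNIV"
      using Pr unfolding P_def by blast+
    ultimately have r1: "r = 1" by linarith
    obtain D where D: "vec.subspace D" "D \<subseteq> C" "vec.dim D = 1" "Supp D = UNIV"
      using r1 \<open>\<exists>D. vec.subspace D \<and> D \<subseteq> C \<and> vec.dim D = r \<and> Supp D = UNIV\<close> by blast
    obtain B where B: "B \<subseteq> D" "vec.independent B" "D \<subseteq> vec.span B" "card B = vec.dim D"
      using vec.basis_exists by blast
    have "card B = 1" using B(4) D(3) by simp
    then obtain v where v: "B = {v}" by (rule card_1_singletonE)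
    have "Supp D \<subseteq> supp v"
      unfolding Supp_def
    proof
      fix i assume "i \<in> (\<Union>x\<in>D. supp x)"
      then obtain w where "w \<in> D" "i \<in> supp w" by auto
      moreover have "w \<in> vec.span {v}" using B(3) v \<open>w \<in> D\<close> by blast
      then obtain c where "w = c *s v" unfolding vec.span_singleton by blast
      ultimately show "i \<in> supp v" unfolding supp_def by auto
    qed
    then have "supp v = UNIV" using D(4) by auto
    then have "wt v = CARD('n)" unfolding wt_def by simp
    moreover have "v \<in> C" using B(1) D(2) v by auto
    ultimately show False using nofull by auto
  qed
  have "(LEAST r. P r) = 2" by (rule Least_equality[of P 2, OF P2 Pge])
  then have "(LEAST r. 0 < r \<and> (\<exists>D. vec.subspace D \<and> D \<subseteq> C \<and> vec.dim D = r \<and> Supp D = UNIV)) = 2"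
    unfolding P_def .
  then have "covering_dim C = enat 2" unfolding covering_dim_def using SuppC by simp
  with md show ?thesis by simp
qed



lemma dotp_add: "dotp (x + z) y = dotp x y + dotp z y"
  unfolding dotp_def by (simp add: sum.distrib distrib_right)

lemma dotp_scale: "dotp (c *s x) y = c * dotp x y"
  unfolding dotp_def by (simp add: sum_distrib_left mult.assoc)

lemma dotp_cong: "(\<And>m. x $ m * y $ m = f m) \<Longrightarrow> dotp x y = sum f UNIV"
  unfolding dotp_def by (rule sum.cong) auto

lemma dotp_zero: "dotp 0 y = 0"
  unfolding dotp_def by simp

lemma subspace_orth:
  fixes y :: "'a::{finite,field} ^ 'n::finite"
  shows "vec.subspace {x. dotp x y = 0}"
  unfolding vec.subspace_def by (simp add: dotp_add dotp_scale dotp_zero)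

lemma subspace_coord0:
  shows "vec.subspace {x :: 'a::{finite,field} ^ 'n::finite. x $ j = 0}"
  unfolding vec.subspace_def by simp

lemma parta:
  fixes C :: "('a::{finite,field} ^ 'n::finite) set"
  assumes sub: "vec.subspace C" and dimk: "vec.dim C = k" and k2: "k \<ge> 2"
    and dh: "dual_hamming C"
  shows "min_dist (dual_code C) = 3 \<and> covering_dim C = enat k"
proof -
  have "\<exists>G :: nat \<Rightarrow> 'a ^ 'n. inj_on G {..<k} \<and> vec.independent (G ` {..<k}) \<and> vec.span (G ` {..<k}) = C \<and>
          (\<forall>j. \<exists>i<k. G i $ j \<noteq> 0) \<and>
          (\<forall>v :: nat \<Rightarrow> 'a. (\<forall>i\<ge>k. v i = 0) \<and> v \<noteq> (\<lambda>_. 0) \<longrightarrow>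
              (\<exists>!j. \<exists>c. \<forall>i<k. G i $ j = c * v i))"
    using dh unfolding dual_hamming_def Let_def dimk by (rule conjunct2[THEN conjunct2])
  then obtain G :: "nat \<Rightarrow> 'a ^ 'n" where G: "inj_on G {..<k} \<and> vec.independent (G ` {..<k}) \<and> vec.span (G ` {..<k}) = C \<and>
          (\<forall>j. \<exists>i<k. G i $ j \<noteq> 0) \<and>
          (\<forall>v :: nat \<Rightarrow> 'a. (\<forall>i\<ge>k. v i = 0) \<and> v \<noteq> (\<lambda>_. 0) \<longrightarrow>
              (\<exists>!j. \<exists>c. \<forall>i<k. G i $ j = c * v i))" by (rule exE)
  note Ginj = G[THEN conjunct1]
  note Gspan = G[THEN conjunct2, THEN conjunct2, THEN conjunct1]
  note cols = G[THEN conjunct2, THEN conjunct2, THEN conjunct2, THEN conjunct1]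
  note uniq = G[THEN conjunct2, THEN conjunct2, THEN conjunct2, THEN conjunct2]
  have GC: "G i \<in> C" if "i < k" for i
  proof -
    have "G i \<in> vec.span (G ` {..<k})" using that by (intro vec.span_base) auto
    then show ?thesis using Gspan by simp
  qed
  have dualI: "y \<in> dual_code C" if "\<forall>i<k. dotp (G i) y = 0" for y
  proof -
    have "G ` {..<k} \<subseteq> {x. dotp x y = 0}" using that by auto
    then have "vec.span (G ` {..<k}) \<subseteq> {x. dotp x y = 0}"
      by (rule vec.span_minimal[OF _ subspace_orth])
    then show ?thesis unfolding dual_code_def using Gspan by auto
  qed
  have ex: "\<exists>j c. \<forall>i<k. G i $ j = c * v i" if "\<forall>i\<ge>k. v i = 0" "v \<noteq> (\<lambda>_. 0)" for v
    using ex1_implies_ex[OF uniq[rule_format, OF conjI[OF that]]] by blast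
  have low: "3 \<le> wt y" if y: "y \<in> dual_code C" "y \<noteq> 0" for y
  proof (rule ccontr)
    assume "\<not> 3 \<le> wt y"
    then have c2: "card (supp y) \<le> 2" unfolding wt_def by simp
    have orth: "dotp (G i) y = 0" if "i < k" for i using y(1) GC[OF that] unfolding dual_code_def by auto
    obtain j where j: "y $ j \<noteq> 0" using y(2) vec_eq_iff[of y 0] by auto
    show False
    proof (cases "supp y - {j} = {}")
      case True
      then have yz: "y $ m = 0" if "m \<noteq> j" for m using that unfolding supp_def by auto
      have "G i $ j = 0" if i: "i < k" for i
      proof -
        have "dotp (G i) y = (\<Sum>m\<in>UNIV. if m = j then G i $ j * y $ j else 0)"
          by (rule dotp_cong) (use yz in auto)
        then have "dotp (G i) y = G i $ j * y $ j" by simp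
        then show ?thesis using orth[OF i] j by simp
      qed
      then show False using cols by blast
    next
      case False
      then obtain l where l: "l \<in> supp y" "l \<noteq> j" by auto
      have jl: "{j, l} \<subseteq> supp y" using j l unfolding supp_def by auto
      have "card {j, l} = 2" using l by simp
      then have "supp y = {j, l}" using card_subset_eq[OF _ jl] c2 card_mono[OF _ jl] by simp
      then have yz: "y $ m = 0" if "m \<noteq> j" "m \<noteq> l" for m using that unfolding supp_def by auto
      have yl: "y $ l \<noteq> 0" using l unfolding supp_def by auto
      have rel: "G i $ j = (- (y $ l / y $ j)) * G i $ l" if i: "i < k" for i
      proof -
        have "dotp (G i) y = (\<Sum>m\<in>UNIV. (if m = j then G i $ j * y $ j else 0) + (if m = l then G i $ l * y $ l else 0))"
          by (rule dotp_cong) (use yz l(2) in auto)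
        then have "dotp (G i) y = G i $ j * y $ j + G i $ l * y $ l" by (simp add: sum.distrib)
        then have "G i $ j * y $ j = - (G i $ l * y $ l)" using orth[OF i] by (simp add: add_eq_0_iff)
        then show ?thesis using j by (simp add: field_simps)
      qed
      define v where "v i = (if i < k then G i $ l else 0)" for i
      have v1: "\<forall>i\<ge>k. v i = 0" unfolding v_def by simp
      have v2: "v \<noteq> (\<lambda>_. 0)"
      proof
        assume v0: "v = (\<lambda>_. 0)"
        have "\<forall>i<k. G i $ l = 0"
        proof (intro allI impI)
          fix i assume i: "i < k"
          have "v i = 0" using v0 by simp
          then show "G i $ l = 0" using i unfolding v_def by simp
        qed
        then show False using cols by blast
      qed
      have "\<exists>!j. \<exists>c. \<forall>i<k. G i $ j = c * v i" using uniq v1 v2 by blast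
      moreover have "\<exists>c. \<forall>i<k. G i $ l = c * v i" by (rule exI[of _ 1]) (simp add: v_def)
      moreover have "\<exists>c. \<forall>i<k. G i $ j = c * v i" by (rule exI[of _ "- (y $ l / y $ j)"]) (simp add: v_def rel)
      ultimately have "j = l" by blast
      then show False using l by simp
    qed
  qed
  define e0 :: "nat \<Rightarrow> 'a" where "e0 i = (if i = 0 then 1 else 0)" for i
  define e1 :: "nat \<Rightarrow> 'a" where "e1 i = (if i = 1 then 1 else 0)" for i
  define e01 :: "nat \<Rightarrow> 'a" where "e01 i = (if i = 0 \<or> i = 1 then 1 else 0)" for i
  have k0: "0 < k" and k1: "1 < k" using k2 by auto
  have z0: "\<forall>i\<ge>k. e0 i = 0" "\<forall>i\<ge>k. e1 i = 0" "\<forall>i\<ge>k. e01 i = 0"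
    using k2 unfolding e0_def e1_def e01_def by auto
  have n0: "e0 \<noteq> (\<lambda>_. 0)" "e1 \<noteq> (\<lambda>_. 0)" "e01 \<noteq> (\<lambda>_. 0)"
    unfolding e0_def e1_def e01_def by (auto simp: fun_eq_iff)
  obtain j1 c1 where J1: "\<forall>i<k. G i $ j1 = c1 * e0 i"
    using ex[OF z0(1) n0(1)] by blast
  obtain j2 c2 where J2: "\<forall>i<k. G i $ j2 = c2 * e1 i"
    using ex[OF z0(2) n0(2)] by blast
  obtain j3 c3 where J3: "\<forall>i<k. G i $ j3 = c3 * e01 i"
    using ex[OF z0(3) n0(3)] by blast
  have c10: "c1 \<noteq> 0"
  proof
    assume "c1 = 0" then have "\<forall>i<k. G i $ j1 = 0" using J1 by simp
    then show False using cols by blast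
  qed
  have c20: "c2 \<noteq> 0"
  proof
    assume "c2 = 0" then have "\<forall>i<k. G i $ j2 = 0" using J2 by simp
    then show False using cols by blast
  qed
  have c30: "c3 \<noteq> 0"
  proof
    assume "c3 = 0" then have "\<forall>i<k. G i $ j3 = 0" using J3 by simp
    then show False using cols by blast
  qed
  have g10: "G 0 $ j1 = c1" and g11: "G 1 $ j1 = 0" using J1 k0 k1 unfolding e0_def by auto
  have g20: "G 0 $ j2 = 0" and g21: "G 1 $ j2 = c2" using J2 k0 k1 unfolding e1_def by auto
  have g30: "G 0 $ j3 = c3" and g31: "G 1 $ j3 = c3" using J3 k0 k1 unfolding e01_def by auto
  have d12: "j1 \<noteq> j2" using g10 g20 c10 by auto
  have d13: "j1 \<noteq> j3" using g11 g31 c30 by auto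
  have d23: "j2 \<noteq> j3" using g20 g30 c30 by auto
  define y :: "'a ^ 'n" where
    "y = (\<chi> m. (if m = j1 then c3 / c1 else 0) + (if m = j2 then c3 / c2 else 0) + (if m = j3 then -1 else 0))"
  have yd: "y \<in> dual_code C"
  proof (rule dualI, intro allI impI)
    fix i assume i: "i < k"
    have "dotp (G i) y = (\<Sum>m\<in>UNIV. (if m = j1 then G i $ j1 * (c3 / c1) else 0) + (if m = j2 then G i $ j2 * (c3 / c2) else 0)
        + (if m = j3 then - G i $ j3 else 0))"
      by (rule dotp_cong) (simp add: y_def distrib_left)
    then have "dotp (G i) y = G i $ j1 * (c3 / c1) + G i $ j2 * (c3 / c2) - G i $ j3"
      by (simp add: sum.distrib)
    also have "\<dots> = c3 * (e0 i + e1 i - e01 i)" using J1 J2 J3 i c10 c20 by (simp add: field_simps)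
    also have "\<dots> = 0" unfolding e0_def e1_def e01_def by auto
    finally show "dotp (G i) y = 0" .
  qed
  have "supp y = {j1, j2, j3}"
    unfolding supp_def y_def using d12 d13 d23 c10 c20 c30 by auto
  then have wty: "wt y = 3" unfolding wt_def using d12 d13 d23 by simp
  have y0: "y \<noteq> 0" using wty unfolding wt_def supp_def by auto
  have md: "min_dist (dual_code C) = 3"
    unfolding min_dist_def
  proof (rule Least_equality)
    show "\<exists>x\<in>dual_code C. x \<noteq> 0 \<and> wt x = 3" using yd y0 wty by blast
  next
    fix w assume "\<exists>x\<in>dual_code C. x \<noteq> 0 \<and> wt x = w"
    then show "3 \<le> w" using low by blast
  qed
  have SuppC: "Supp C = UNIV"
  proof -
    have "j \<in> Supp C" for j
    proof -
      obtain i where "i < k" "G i $ j \<noteq> 0" using cols by blast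
      then show ?thesis unfolding Supp_def supp_def using GC by blast
    qed
    then show ?thesis by auto
  qed
  define P where "P r = (0 < r \<and> (\<exists>D. vec.subspace D \<and> D \<subseteq> C \<and> vec.dim D = r \<and> Supp D = UNIV))" for r
  have Pk: "P k" unfolding P_def using k0 sub dimk SuppC by blast
  have q2: "2 \<le> CARD('a)" by (rule card_field_ge2)
  have Pge: "k \<le> r" if Pr: "P r" for r
  proof (rule ccontr)
    assume "\<not> k \<le> r"
    then have rk: "r < k" by simp
    obtain D where D: "vec.subspace D" "D \<subseteq> C" "vec.dim D = r" "Supp D = UNIV"
      using Pr unfolding P_def by blast
    obtain B where B: "B \<subseteq> D" "vec.independent B" "D \<subseteq> vec.span B" "card B = vec.dim D"
      using vec.basis_exists by blast
    have fB: "finite B" using B(2) vec.independent_bound_general by blast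
    have "\<forall>b\<in>B. \<exists>u. b = (\<Sum>i<k. u i *s G i)"
    proof
      fix b assume "b \<in> B"
      then have "b \<in> vec.span (G ` {..<k})" using B(1) D(2) Gspan by auto
      then obtain u where "b = (\<Sum>v\<in>G ` {..<k}. u v *s v)" unfolding vec.span_finite[OF finite_imageI[OF finite_lessThan]] by auto
      also have "\<dots> = (\<Sum>i<k. u (G i) *s G i)" by (rule sum.reindex[OF Ginj, unfolded comp_def])
      finally show "\<exists>u. b = (\<Sum>i<k. u i *s G i)" by (rule exI[of _ "\<lambda>i. u (G i)"])
    qed
    from bchoice[OF this] obtain coef where coef: "\<forall>b\<in>B. b = (\<Sum>i<k. coef b i *s G i)" by blast
    define \<Phi> where "\<Phi> w = restrict (\<lambda>b. \<Sum>i<k. coef b i * w i) B" for w :: "nat \<Rightarrow> 'a"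
    let ?PK = "PiE {..<k} (\<lambda>_. UNIV :: 'a set)"
    let ?PB = "PiE B (\<lambda>_. UNIV :: 'a set)"
    have cPK: "card ?PK = CARD('a) ^ k" by (simp add: card_PiE)
    have cPB: "card ?PB = CARD('a) ^ r" using fB B(4) D(3) by (simp add: card_PiE)
    have lt: "CARD('a) ^ r < CARD('a) ^ k" using q2 rk by (intro power_strict_increasing) auto
    have "\<not> inj_on \<Phi> ?PK"
    proof
      assume "inj_on \<Phi> ?PK"
      moreover have "\<Phi> ` ?PK \<subseteq> ?PB" unfolding \<Phi>_def by auto
      moreover have "finite ?PB" using fB by (intro finite_PiE) auto
      ultimately have "card ?PK \<le> card ?PB" by (rule card_inj_on_le)
      then show False using cPK cPB lt by simp
    qed
    then obtain w1 w2 where w: "w1 \<in> ?PK" "w2 \<in> ?PK" "\<Phi> w1 = \<Phi> w2" "w1 \<noteq> w2"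
      unfolding inj_on_def by blast
    define w where "w i = w1 i - w2 i" for i
    have w1: "\<forall>i\<ge>k. w i = 0"
    proof (intro allI impI)
      fix i assume "k \<le> i"
      then have ni: "i \<notin> {..<k}" by simp
      have "w1 i = undefined" by (rule PiE_arb[OF w(1) ni])
      moreover have "w2 i = undefined" by (rule PiE_arb[OF w(2) ni])
      ultimately show "w i = 0" unfolding w_def by simp
    qed
    have w2: "w \<noteq> (\<lambda>_. 0)"
    proof
      assume "w = (\<lambda>_. 0)"
      then have "\<forall>i. w1 i = w2 i" unfolding w_def by (simp add: fun_eq_iff)
      then show False using w(4) by auto
    qed
    obtain j c where jc: "\<forall>i<k. G i $ j = c * w i" using ex[OF w1 w2] by blast
    have Bj: "b $ j = 0" if b: "b \<in> B" for b
    proof -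
      have "\<Phi> w1 b = \<Phi> w2 b" using w(3) by simp
      then have e: "(\<Sum>i<k. coef b i * w1 i) = (\<Sum>i<k. coef b i * w2 i)" unfolding \<Phi>_def using b by simp
      have s0: "(\<Sum>i<k. coef b i * w i) = 0"
        unfolding w_def using e by (simp add: right_diff_distrib sum_subtractf)
      have "b $ j = (\<Sum>i<k. coef b i * G i $ j)" using arg_cong[OF bspec[OF coef b], of "\<lambda>v. v $ j"] by simp
      also have "\<dots> = (\<Sum>i<k. c * (coef b i * w i))" using jc by (intro sum.cong) auto
      also have "\<dots> = c * (\<Sum>i<k. coef b i * w i)" by (simp add: sum_distrib_left)
      finally show ?thesis using s0 by simp
    qed
    have "vec.span B \<subseteq> {x. x $ j = 0}" using Bj by (intro vec.span_minimal[OF _ subspace_coord0]) auto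
    then have "j \<notin> Supp D" using B(3) unfolding Supp_def supp_def by auto
    then show False using D(4) by auto
  qed
  have "(LEAST r. P r) = k" by (rule Least_equality[of P k, OF Pk Pge])
  then have "(LEAST r. 0 < r \<and> (\<exists>D. vec.subspace D \<and> D \<subseteq> C \<and> vec.dim D = r \<and> Supp D = UNIV)) = k"
    unfolding P_def .
  then have "covering_dim C = enat k" unfolding covering_dim_def using SuppC by simp
  with md show ?thesis by simp
qed


theorem mainTheorem3:
  fixes C :: "('a::{finite,field} ^ 'n::finite) set" and k :: nat
  assumes "is_code C" and "vec.dim C = k" and "k \<ge> 2"
  shows "(dual_hamming C \<longrightarrow>
            min_dist (dual_code C) = 3 \<and> covering_dim C = enat k \<and>
            int k = int k - int (min_dist (dual_code C)) + 3)
       \<and> (is_MDS C \<and> (\<forall>x\<in>C. wt x \<noteq> CARD('n)) \<longrightarrow>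
            min_dist (dual_code C) = k + 1 \<and> covering_dim C = enat 2 \<and>
            (2::int) = int k - int (min_dist (dual_code C)) + 3)"
proof (intro conjI impI)
  have sub: "vec.subspace C" using assms(1) unfolding is_code_def .
  {
    assume dh: "dual_hamming C"
    have r: "min_dist (dual_code C) = 3 \<and> covering_dim C = enat k" by (rule parta[OF sub assms(2) assms(3) dh])
    then show "min_dist (dual_code C) = 3" "covering_dim C = enat k" by simp_all
    show "int k = int k - int (min_dist (dual_code C)) + 3" using r by simp
  }
  {
    assume h: "is_MDS C \<and> (\<forall>x\<in>C. wt x \<noteq> CARD('n))"
    have r: "min_dist (dual_code C) = k + 1 \<and> covering_dim C = enat 2"
      using partb[OF _ assms(2) assms(3)] h by blast
    then show "min_dist (dual_code C) = k + 1" "covering_dim C = enat 2" by simp_all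
    show "(2::int) = int k - int (min_dist (dual_code C)) + 3" using r by simp
  }
qed

end
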